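(* Every (possibly rotated) rectangle $R\subset\mathbb{R}^2$ with side lengths $a$ and $b$ satisfies $N(R)\leqslant(a+\sqrt2)(b+\sqrt2)$.
   Context: For $D\subseteq\mathbb{R}^2$, the integer cardinality is $N(D)=|\mathbb{Z}^2\cap D|$, the number of integer points in $D$. *)

theory Defs
  imports Complex_Main
begin

definition rect :: "real \<times> real \<Rightarrow> real \<Rightarrow> real \<Rightarrow> real \<Rightarrow> (real \<times> real) set" where
  "rect p \<theta> a b = {(fst p + s * cos \<theta> - t * sin \<theta>, snd p + s * sin \<theta> + t * cos \<theta>) | s t.
      0 \<le> s \<and> s \<le> a \<and> 0 \<le> t \<and> t \<le> b}"

definition int_card :: "(real \<times> real) set \<Rightarrow> nat" where
  "int_card D = card {z :: int \<times> int. (of_int (fst z), of_int (snd z)) \<in> D}"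

end

theory Submission
  imports Defs "HOL-Analysis.Analysis"
begin

definition rot :: "real \<Rightarrow> real^2 \<Rightarrow> real^2" where
 "rot th u = vector [cos th * u$1 - sin th * u$2, sin th * u$1 + cos th * u$2]"

lemma cs1: "cos th * (cos th * x) + sin th * (sin th * x) = (x::real)"
proof -
  have "cos th * (cos th * x) + sin th * (sin th * x) = ((sin th)^2 + (cos th)^2) * x"
    by (simp add: power2_eq_square distrib_right)
  also have "\<dots> = x" by simp
  finally show ?thesis .
qed

lemma rot_comp: "rot th (rot (-th) u) = u"
  unfolding rot_def
  apply (simp add: vec_eq_iff forall_2 algebra_simps)
  using cs1[of th "u$1"] cs1[of th "u$2"] by linarith

lemma rot_orth: "orthogonal_transformation (rot th)"
proof -
  have e: "sin th * sin th + cos th * cos th = 1" by (metis sin_cos_squared_add power2_eq_square)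
  have lin: "linear (rot th)"
    by (rule linearI) (simp_all add: rot_def vec_eq_iff forall_2 algebra_simps)
  have "rot th v \<bullet> rot th w = v \<bullet> w" for v w
  proof -
    show ?thesis
      apply (simp add: rot_def inner_vec_def sum_2 algebra_simps)
      using cs1[of th "v$1 * w$1"] cs1[of th "v$2 * w$2"] by linarith
  qed
  with lin show ?thesis by (simp add: orthogonal_transformation_def)
qed

lemma measure_cbox2:
  fixes l u :: "real^2"
  assumes "l$1 \<le> u$1" "l$2 \<le> u$2"
  shows "measure lebesgue (cbox l u) = (u$1 - l$1) * (u$2 - l$2)"
    and "measure lebesgue (box l u) = (u$1 - l$1) * (u$2 - l$2)"
proof -
  have lu: "\<forall>i. l$i \<le> u$i" using assms by (simp add: forall_2)
  have "l \<in> cbox l u" using lu by (simp add: mem_box_cart)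
  then have ne: "cbox l u \<noteq> {}" by blast
  have 1: "measure lborel (cbox l u) = (u$1 - l$1) * (u$2 - l$2)"
    using content_cbox_cart[OF ne] by (simp add: prod_2 UNIV_2)
  have le: "\<And>b. b \<in> Basis \<Longrightarrow> l \<bullet> b \<le> u \<bullet> b"
    using lu by (auto simp: Basis_vec_def cart_eq_inner_axis[symmetric])
  have "measure lborel (box l u) = measure lborel (cbox l u)"
    using measure_lborel_box[OF le] measure_lborel_cbox[OF le] by simp
  then show "measure lebesgue (cbox l u) = (u$1 - l$1) * (u$2 - l$2)"
    "measure lebesgue (box l u) = (u$1 - l$1) * (u$2 - l$2)" using 1 by simp_all
qed


lemma rot_alg:
  fixes C S s t d1 d2 :: real
  assumes "C*C + S*S = 1"
  shows "C*(s*C - t*S + d1) + S*(s*S + t*C + d2) = s + (C*d1 + S*d2)"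
    and "-S*(s*C - t*S + d1) + C*(s*S + t*C + d2) = t + (-S*d1 + C*d2)"
    and "(C*d1 + S*d2)^2 + (-S*d1 + C*d2)^2 = d1^2 + d2^2"
proof -
  have "C*(s*C - t*S + d1) + S*(s*S + t*C + d2) = s*(C*C+S*S) + (C*d1 + S*d2)"
    by (simp add: algebra_simps)
  then show "C*(s*C - t*S + d1) + S*(s*S + t*C + d2) = s + (C*d1 + S*d2)" using assms by simp
  have "-S*(s*C - t*S + d1) + C*(s*S + t*C + d2) = t*(C*C+S*S) + (-S*d1 + C*d2)"
    by (simp add: algebra_simps)
  then show "-S*(s*C - t*S + d1) + C*(s*S + t*C + d2) = t + (-S*d1 + C*d2)" using assms by simp
  have "(C*d1 + S*d2)^2 + (-S*d1 + C*d2)^2 = (C*C+S*S)*(d1^2 + d2^2)"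
    by (simp add: algebra_simps power2_eq_square)
  then show "(C*d1 + S*d2)^2 + (-S*d1 + C*d2)^2 = d1^2 + d2^2" using assms by simp
qed

lemma small_bound:
  fixes e f d1 d2 :: real
  assumes "e^2 + f^2 = d1^2 + d2^2" "\<bar>d1\<bar> < 1/2" "\<bar>d2\<bar> < 1/2"
  shows "\<bar>e\<bar> \<le> sqrt (1/2)"
proof -
  have "\<bar>d1\<bar> \<le> \<bar>1/2\<bar>" "\<bar>d2\<bar> \<le> \<bar>1/2\<bar>" using assms(2,3) by simp_all
  then have "d1^2 \<le> (1/2)^2" "d2^2 \<le> (1/2)^2" by (simp_all only: abs_le_square_iff)
  then have h: "d1^2 \<le> 1/4" "d2^2 \<le> 1/4" by (simp_all add: power_divide)
  have "0 \<le> f^2" by simp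
  then have "e^2 \<le> 1/2" using assms(1) h by linarith
  then have "\<bar>e\<bar>^2 \<le> 1/2" by simp
  then show ?thesis by (rule real_le_rsqrt)
qed


theorem proposition12:
  fixes p :: "real \<times> real" and \<theta> a b :: real
  assumes "a > 0" and "b > 0"
  shows "real (int_card (rect p \<theta> a b)) \<le> (a + sqrt 2) * (b + sqrt 2)"
proof -
  define S where "S = {z :: int \<times> int. (of_int (fst z), of_int (snd z)) \<in> rect p \<theta> a b}"
  have ic: "int_card (rect p \<theta> a b) = card S" by (simp add: int_card_def S_def)
  show ?thesis
  proof (cases "finite S")
    case False
    then show ?thesis using assms ic by simp
  next
    case True
    define c where "c = sqrt (1/2)"
    have c0: "0 \<le> c" by (simp add: c_def)
    have c2: "2 * c = sqrt 2"
    proof -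
      have "2 * c = sqrt 4 * sqrt (1/2)" by (simp add: c_def)
      also have "\<dots> = sqrt (4 * (1/2))" by (rule real_sqrt_mult[symmetric])
      also have "\<dots> = sqrt 2" by simp
      finally show ?thesis .
    qed
    define P :: "real^2" where "P = vector [fst p, snd p]"
    define K :: "(real^2) set" where "K = cbox (vector [-c,-c]) (vector [a+c, b+c])"
    define T where "T = (\<lambda>x. P + x) ` (rot \<theta> ` K)"
    define B where "B = (\<lambda>z::int\<times>int. box (vector [of_int (fst z) - 1/2, of_int (snd z) - 1/2])
         (vector [of_int (fst z) + 1/2, of_int (snd z) + 1/2]) :: (real^2) set)"
    have Kl: "K \<in> lmeasurable" by (simp add: K_def)
    have TK: "rot \<theta> ` K \<in> lmeasurable" "measure lebesgue (rot \<theta> ` K) = measure lebesgue K"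
      using measurable_orthogonal_image[OF rot_orth Kl] measure_orthogonal_image[OF rot_orth Kl]
      by auto
    have Tl: "T \<in> lmeasurable" unfolding T_def using measurable_translation[OF TK(1)] by simp
    have mT: "measure lebesgue T = (a + sqrt 2)*(b + sqrt 2)"
    proof -
      have "measure lebesgue T = measure lebesgue K"
        unfolding T_def using measure_translation[of P "rot \<theta> ` K"] TK(2) by simp
      also have "\<dots> = ((a + c) - (-c)) * ((b + c) - (-c))"
        unfolding K_def using measure_cbox2(1)[of "vector [-c,-c]" "vector [a+c, b+c]"] c0 assms
        by simp
      also have "\<dots> = (a + sqrt 2)*(b + sqrt 2)" using c2 by (simp add: ac_simps)
      finally show ?thesis .
    qed
    have mB: "measure lebesgue (B z) = 1" for z
      unfolding B_def using measure_cbox2(2) by simp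
    have disj: "disjoint_family_on B S"
      unfolding disjoint_family_on_def
    proof (intro ballI impI)
      fix z w assume "z \<in> S" "w \<in> S" "z \<noteq> w"
      show "B z \<inter> B w = {}"
      proof (rule ccontr)
        assume "B z \<inter> B w \<noteq> {}"
        then obtain x where x: "x \<in> B z" "x \<in> B w" by blast
        have "\<bar>real_of_int (fst z) - real_of_int (fst w)\<bar> < 1"
          "\<bar>real_of_int (snd z) - real_of_int (snd w)\<bar> < 1"
          using x unfolding B_def mem_box_cart forall_2 by auto
        then have "\<bar>fst z - fst w\<bar> < 1" "\<bar>snd z - snd w\<bar> < 1"
          by linarith+
        then have "fst z = fst w" "snd z = snd w" by auto
        then show False using \<open>z \<noteq> w\<close> by (simp add: prod_eq_iff)
      qed
    qed
    have sub: "B z \<subseteq> T" if zS: "z \<in> S" for z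
    proof
      fix x assume x: "x \<in> B z"
      obtain s t where st: "0 \<le> s" "s \<le> a" "0 \<le> t" "t \<le> b"
        "real_of_int (fst z) = fst p + s * cos \<theta> - t * sin \<theta>"
        "real_of_int (snd z) = snd p + s * sin \<theta> + t * cos \<theta>"
      proof -
        have "\<exists>s t. 0 \<le> s \<and> s \<le> a \<and> 0 \<le> t \<and> t \<le> b \<and>
          real_of_int (fst z) = fst p + s * cos \<theta> - t * sin \<theta> \<and>
          real_of_int (snd z) = snd p + s * sin \<theta> + t * cos \<theta>"
          using zS unfolding S_def rect_def mem_Collect_eq
          apply (elim exE conjE)
          apply (simp only: prod.inject)
          by blast
        then show ?thesis using that by blast
      qed
      define d1 where "d1 = x$1 - real_of_int (fst z)"
      define d2 where "d2 = x$2 - real_of_int (snd z)"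
      have xb: "real_of_int (fst z) - 1/2 < x$1" "x$1 < real_of_int (fst z) + 1/2"
          "real_of_int (snd z) - 1/2 < x$2" "x$2 < real_of_int (snd z) + 1/2"
        using x unfolding B_def mem_box_cart forall_2 by simp_all
      have d: "\<bar>d1\<bar> < 1/2" "\<bar>d2\<bar> < 1/2"
        unfolding abs_less_iff d1_def d2_def using xb by (intro conjI; linarith)+
      define u where "u = rot (-\<theta>) (x - P)"
      have xu: "x = P + rot \<theta> u" unfolding u_def rot_comp by simp
      have e: "cos \<theta> * cos \<theta> + sin \<theta> * sin \<theta> = 1"
        by (rule sin_cos_squared_add3)
      have x1: "x$1 - fst p = s * cos \<theta> - t * sin \<theta> + d1" using st(5) d1_def by simp
      have x2: "x$2 - snd p = s * sin \<theta> + t * cos \<theta> + d2" using st(6) d2_def by simp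
      have u1: "u$1 = s + (cos \<theta> * d1 + sin \<theta> * d2)"
      proof -
        have "u$1 = cos \<theta> * (x$1 - fst p) + sin \<theta> * (x$2 - snd p)"
          by (simp add: u_def rot_def P_def)
        also have "\<dots> = s + (cos \<theta> * d1 + sin \<theta> * d2)"
          unfolding x1 x2 using rot_alg(1)[OF e] by simp
        finally show ?thesis .
      qed
      have u2: "u$2 = t + (- sin \<theta> * d1 + cos \<theta> * d2)"
      proof -
        have "u$2 = - sin \<theta> * (x$1 - fst p) + cos \<theta> * (x$2 - snd p)"
          by (simp add: u_def rot_def P_def)
        also have "\<dots> = t + (- sin \<theta> * d1 + cos \<theta> * d2)"
          unfolding x1 x2 using rot_alg(2)[OF e] by simp
        finally show ?thesis .
      qed
      have sq: "(cos \<theta> * d1 + sin \<theta> * d2)^2 + (- sin \<theta> * d1 + cos \<theta> * d2)^2 = d1^2 + d2^2"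
        using rot_alg(3)[OF e] by simp
      have b1: "\<bar>cos \<theta> * d1 + sin \<theta> * d2\<bar> \<le> c"
        using small_bound[OF sq d] c_def by simp
      have b2: "\<bar>- sin \<theta> * d1 + cos \<theta> * d2\<bar> \<le> c"
      proof -
        have sq2: "(- sin \<theta> * d1 + cos \<theta> * d2)^2 + (cos \<theta> * d1 + sin \<theta> * d2)^2 = d1^2 + d2^2"
          using sq by linarith
        show ?thesis using small_bound[OF sq2 d] c_def by simp
      qed
      have "u \<in> K" unfolding K_def mem_box_cart forall_2 using u1 u2 b1 b2 st(1-4)
        by (auto simp: abs_le_iff)
      then show "x \<in> T" unfolding T_def using xu by blast
    qed
    have "real (card S) = (\<Sum>z\<in>S. measure lebesgue (B z))" by (simp add: mB)
    also have "\<dots> = measure lebesgue (\<Union>z\<in>S. B z)"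
    proof (rule measure_finite_Union[symmetric])
      have Bl: "B z \<in> lmeasurable" for z by (simp add: B_def)
      show "finite S" by (rule True)
      show "B ` S \<subseteq> sets lebesgue" using Bl by (auto simp: fmeasurable_def)
      show "disjoint_family_on B S" by (rule disj)
      show "emeasure lebesgue (B z) \<noteq> \<infinity>" if "z \<in> S" for z using Bl[of z] by (auto simp: fmeasurable_def)
    qed
    also have "\<dots> \<le> measure lebesgue T"
      by (rule measure_mono_fmeasurable) (use sub Tl True in \<open>auto simp: B_def\<close>)
    finally show ?thesis using ic mT by simp
  qed
qed

end
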